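(* Let $Z\subseteq\{0,1\}^n$ and let $\bm e_i$ be the $i$-th standard basis vector of $\mathbb R^n$, for some $i\in\{1,\dots,n\}$. Then $$P(\bm e_i)=\{(\bm x,\bm z)\in\mathbb R^n\times\operatorname{conv}(Z):\ |x_i|\le z_i\}.$$
   Context: For $\bm\alpha\in\mathbb R^n$, $P_0(\bm\alpha)=\{(\bm x,\bm z)\in\mathbb R^n\times Z:\ \sum_{j=1}^n|\alpha_jx_j|\le\sqrt{\sum_{j=1}^n\alpha_j^2z_j}\}$ and $P(\bm\alpha)=\operatorname{conv}(P_0(\bm\alpha))$, the convex hull. *)

theory Defs
  imports "HOL-Analysis.Analysis"
begin

definition P0 :: "(real^'n::finite) \<Rightarrow> (real^'n) set \<Rightarrow> ((real^'n) \<times> (real^'n)) set" where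
  "P0 \<alpha> Z = {(x, z). z \<in> Z \<and>
      (\<Sum>j\<in>UNIV. \<bar>\<alpha>$j * x$j\<bar>) \<le> sqrt (\<Sum>j\<in>UNIV. (\<alpha>$j)\<^sup>2 * z$j)}"

definition P :: "(real^'n::finite) \<Rightarrow> (real^'n) set \<Rightarrow> ((real^'n) \<times> (real^'n)) set" where
  "P \<alpha> Z = convex hull (P0 \<alpha> Z)"

end

theory Submission
  imports Defs
begin

lemma P0_axis:
  fixes Z :: "(real^'n) set" and i :: 'n
  assumes "Z \<subseteq> {z. \<forall>j. z$j \<in> {0, 1}}"
  shows "P0 (axis i 1) Z = {(x, z). z \<in> Z \<and> \<bar>x$i\<bar> \<le> z$i}"
proof -
  have s1: "(\<Sum>j\<in>UNIV. \<bar>axis i (1::real) $ j * x$j\<bar>) = \<bar>x$i\<bar>" for x :: "real^'n"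
  proof -
    have "(\<Sum>j\<in>UNIV. \<bar>axis i (1::real) $ j * x$j\<bar>) = (\<Sum>j\<in>UNIV. if j = i then \<bar>x$i\<bar> else 0)"
      by (intro sum.cong) (auto simp: axis_def)
    then show ?thesis by simp
  qed
  have s2: "(\<Sum>j\<in>UNIV. (axis i (1::real) $ j)\<^sup>2 * z$j) = z$i" for z :: "real^'n"
  proof -
    have "(\<Sum>j\<in>UNIV. (axis i (1::real) $ j)\<^sup>2 * z$j) = (\<Sum>j\<in>UNIV. if j = i then z$i else 0)"
      by (intro sum.cong) (auto simp: axis_def)
    then show ?thesis by simp
  qed
  have sq: "sqrt (z$i) = z$i" if "z \<in> Z" for z
  proof -
    have "z$i = 0 \<or> z$i = 1" using assms that by auto
    then show ?thesis by auto
  qed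
  show ?thesis unfolding P0_def s1 s2 using sq by auto
qed

lemma memR: fixes x z x' z' :: "real^'n" and u v :: real and i::'n
  assumes "u *\<^sub>R z + v *\<^sub>R z' \<in> C" "\<bar>u * x$i + v * x'$i\<bar> \<le> u * z$i + v * z'$i"
  shows "u *\<^sub>R (x, z) + v *\<^sub>R (x', z') \<in> {(x, z). z \<in> C \<and> \<bar>x$i\<bar> \<le> z$i}"
  using assms by simp

theorem mainTheorem6:
  fixes Z :: "(real^'n) set" and i :: 'n
  assumes "Z \<subseteq> {z. \<forall>j. z$j \<in> {0, 1}}"
  shows "P (axis i 1) Z = {(x, z). z \<in> convex hull Z \<and> \<bar>x$i\<bar> \<le> z$i}"
proof
  let ?R = "{(x, z). z \<in> convex hull Z \<and> \<bar>x$i\<bar> \<le> z$i}"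
  have cR: "convex ?R"
  proof (rule convexI)
    fix p q :: "(real^'n) \<times> (real^'n)" and u v :: real
    assume hp: "p \<in> ?R" and hq: "q \<in> ?R" and huv: "0 \<le> u" "0 \<le> v" "u + v = 1"
    obtain x z where p: "p = (x, z)" by fastforce
    obtain x' z' where q: "q = (x', z')" by fastforce
    have h: "z \<in> convex hull Z" "\<bar>x$i\<bar> \<le> z$i" "z' \<in> convex hull Z" "\<bar>x'$i\<bar> \<le> z'$i"
      using hp hq p q by auto
    have "u *\<^sub>R z + v *\<^sub>R z' \<in> convex hull Z"
      using h huv convex_convex_hull convexD by blast
    moreover have "\<bar>u * x$i + v * x'$i\<bar> \<le> u * z$i + v * z'$i"
    proof -
      have "\<bar>u * x$i + v * x'$i\<bar> \<le> u * \<bar>x$i\<bar> + v * \<bar>x'$i\<bar>"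
        using huv abs_triangle_ineq[of "u * x$i" "v * x'$i"] by (simp add: abs_mult)
      also have "\<dots> \<le> u * z$i + v * z'$i"
        using h huv by (intro add_mono mult_left_mono) auto
      finally show ?thesis .
    qed
    ultimately show "u *\<^sub>R p + v *\<^sub>R q \<in> ?R"
      unfolding p q by (rule memR)
  qed
  show "P (axis i 1) Z \<subseteq> ?R"
    unfolding P_def P0_axis[OF assms]
    by (rule hull_minimal[where S=convex, OF _ cR]) (auto intro: hull_inc)
  show "?R \<subseteq> P (axis i 1) Z"
  proof clarify
    fix x z :: "real^'n"
    assume z: "z \<in> convex hull Z" and xz: "\<bar>x$i\<bar> \<le> z$i"
    define t where "t = x$i / z$i"
    define c where "c = (\<chi> j. if j = i then 0 else x$j)"
    define L where "L = (\<lambda>w::real^'n. ((t * w$i) *\<^sub>R axis i (1::real), w))"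
    have lin: "linear L"
      unfolding L_def by (intro linearI) (auto simp: algebra_simps scaleR_add_left)
    have tb: "\<bar>t\<bar> \<le> 1"
    proof (cases "z$i = 0")
      case True then show ?thesis by (simp add: t_def)
    next
      case False
      then have zp: "z$i > 0" using xz by linarith
      have "\<bar>t\<bar> = \<bar>x$i\<bar> / z$i" using zp by (simp add: t_def abs_divide)
      also have "\<dots> \<le> 1" using zp xz by (simp add: divide_le_eq)
      finally show ?thesis .
    qed
    have sub: "(\<lambda>p. (c, 0) + p) ` (L ` Z) \<subseteq> P0 (axis i 1) Z"
    proof (rule subsetI)
      fix p assume "p \<in> (\<lambda>p. (c, 0) + p) ` (L ` Z)"
      then obtain w where w: "w \<in> Z" and pw: "p = (c, 0) + L w" by blast
      have "w$i = 0 \<or> w$i = 1" using assms w by auto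
      then have "\<bar>t * w$i\<bar> \<le> w$i" using tb by auto
      then show "p \<in> P0 (axis i 1) Z"
        unfolding P0_axis[OF assms] pw using w by (simp add: L_def c_def axis_def)
    qed
    have "(c, 0) + L z \<in> (\<lambda>p. (c, 0) + p) ` (convex hull (L ` Z))"
      using z by (simp add: convex_hull_linear_image[OF lin, symmetric])
    also have "\<dots> = convex hull ((\<lambda>p. (c, 0) + p) ` (L ` Z))"
      by (rule convex_hull_translation[symmetric])
    also have "\<dots> \<subseteq> P (axis i 1) Z"
      unfolding P_def by (rule hull_mono[OF sub])
    finally have "(c, 0) + L z \<in> P (axis i 1) Z" .
    moreover have "(c, 0) + L z = (x, z)"
    proof -
      have "t * z$i = x$i"
        using xz by (cases "z$i = 0") (auto simp: t_def)
      then show ?thesis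
        by (auto simp: L_def c_def axis_def vec_eq_iff)
    qed
    ultimately show "(x, z) \<in> P (axis i 1) Z" by simp
  qed
qed

end
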